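(* Let $\Gamma=(-a_1,\dots,-a_k)$ be a linear chain with integers $a_i\ge 2$. Then $\Gamma\in\mathcal G_r$ if and only if there are relatively prime integers $p>q>0$ with $a_1-\cfrac{1}{a_2-\cfrac{1}{\ddots-\cfrac{1}{a_k}}}=\dfrac{p^2}{pq-1}$.
   Context: $\mathcal G_r$ is the smallest set of linear chains (written as the sequence of vertex decorations along the chain) which contains the one-vertex chain $(-4)$ and which, whenever it contains $(-a_1,\dots,-a_k)$, also contains $(-2,-a_1,\dots,-a_{k-1},-a_k-1)$ and $(-a_1-1,-a_2,\dots,-a_k,-2)$. *)

theory Defs
  imports Complex_Main
begin

text \<open>A linear chain is represented by the list of its vertex decorations
  (integers), read along the chain. The set G_r of the paper:\<close>

inductive_set Gr :: "int list set" where
  base: "[-4] \<in> Gr"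
| left: "ds \<in> Gr \<Longrightarrow> ds \<noteq> [] \<Longrightarrow> (-2) # butlast ds @ [last ds - 1] \<in> Gr"
| right: "ds \<in> Gr \<Longrightarrow> ds \<noteq> [] \<Longrightarrow> (hd ds - 1) # tl ds @ [-2] \<in> Gr"

fun hj_cf :: "int list \<Rightarrow> real" where
  "hj_cf [] = 0"
| "hj_cf [a] = of_int a"
| "hj_cf (a # b # rest) = of_int a - 1 / hj_cf (b # rest)"

end

theory Submission
  imports Defs
begin

fun mmul :: "int \<times> int \<times> int \<times> int \<Rightarrow> int \<times> int \<times> int \<times> int \<Rightarrow> int \<times> int \<times> int \<times> int" where
  "mmul (a,b,c,d) (e,f,g,h) = (a*e+b*g, a*f+b*h, c*e+d*g, c*f+d*h)"

definition mM :: "int \<Rightarrow> int \<times> int \<times> int \<times> int" where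
  "mM a = (a, -1, 1, 0)"

fun hm :: "int list \<Rightarrow> int \<times> int \<times> int \<times> int" where
  "hm [] = (1,0,0,1)"
| "hm (a # r) = mmul (mM a) (hm r)"

definition FF :: "int \<Rightarrow> int \<Rightarrow> int \<times> int \<times> int \<times> int" where
  "FF p q = (p^2, 1 - p*(p-q), p*q-1, 1 - q*(p-q))"

lemma mmul_assoc: "mmul (mmul x y) z = mmul x (mmul y z)"
  by (cases x; cases y; cases z) (simp add: algebra_simps)

lemma mmul_id: "mmul (1,0,0,1) x = x"
  by (cases x) simp

lemma mmul_id2: "mmul x (1,0,0,1) = x"
  by (cases x) simp

lemma hm_append: "hm (xs @ ys) = mmul (hm xs) (hm ys)"
  by (induction xs) (simp_all add: mmul_id mmul_assoc)

lemma hm_single: "hm [a] = mM a"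
  by (simp add: mM_def)

lemma mM_suc: "mM (a + 1) = mmul (mM a) (1,0,-1,1)"
  by (simp add: mM_def)

lemma mM_suc2: "mM (a + 1) = mmul (1,1,0,1) (mM a)"
  by (simp add: mM_def)

lemma hm_left: "hm (2 # bl @ [a+1]) = mmul (mM 2) (mmul (hm (bl @ [a])) (1,0,-1,1))"
  by (simp add: hm_append hm_single mM_suc mmul_assoc)

lemma hm_right: "hm ((a+1) # bl @ [2]) = mmul (1,1,0,1) (mmul (hm (a # bl)) (mM 2))"
  by (simp add: hm_append hm_single mM_suc2 mmul_assoc mmul_id2)

lemma FF_left: "mmul (mM 2) (mmul (FF p q) (1,0,-1,1)) = FF (2*p-q) p"
  by (simp add: FF_def mM_def power2_eq_square algebra_simps)

lemma FF_right: "mmul (1,1,0,1) (mmul (FF p q) (mM 2)) = FF (p+q) q"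
  by (simp add: FF_def mM_def power2_eq_square algebra_simps)

lemma Gr_fwd:
  assumes "ds \<in> Gr"
  shows "\<exists>p q. coprime p q \<and> p > q \<and> q > 0 \<and> hm (map uminus ds) = FF p q"
  using assms
proof (induction rule: Gr.induct)
  case base
  show ?case
    by (rule exI[of _ 2], rule exI[of _ 1]) (simp add: FF_def mM_def)
next
  case (left ds)
  then obtain p q where pq: "coprime p q" "p > q" "q > 0" "hm (map uminus ds) = FF p q" by blast
  have ds: "ds = butlast ds @ [last ds]" using left.hyps(2) by simp
  have "map uminus ((-2) # butlast ds @ [last ds - 1]) = 2 # map uminus (butlast ds) @ [- last ds + 1]"
    by simp
  hence "hm (map uminus ((-2) # butlast ds @ [last ds - 1])) =
     mmul (mM 2) (mmul (hm (map uminus (butlast ds) @ [- last ds])) (1,0,-1,1))"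
    by (simp only: hm_left)
  also have "map uminus (butlast ds) @ [- last ds] = map uminus ds"
    by (subst (2) ds) simp
  finally have "hm (map uminus ((-2) # butlast ds @ [last ds - 1])) = FF (2*p-q) p"
    using pq(4) FF_left by simp
  moreover have "coprime (2*p-q) p"
    using pq(1) by (smt (verit, best) coprime_imp_coprime dvd_diff_left_iff)
  ultimately show ?case using pq by (intro exI[of _ "2*p-q"] exI[of _ p]) auto
next
  case (right ds)
  then obtain p q where pq: "coprime p q" "p > q" "q > 0" "hm (map uminus ds) = FF p q" by blast
  have ds: "ds = hd ds # tl ds" using right.hyps(2) by simp
  have "map uminus ((hd ds - 1) # tl ds @ [-2]) = (- hd ds + 1) # map uminus (tl ds) @ [2]"
    by simp
  hence "hm (map uminus ((hd ds - 1) # tl ds @ [-2])) =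
     mmul (1,1,0,1) (mmul (hm (- hd ds # map uminus (tl ds))) (mM 2))"
    by (simp only: hm_right)
  also have "- hd ds # map uminus (tl ds) = map uminus ds"
    by (subst (2) ds) simp
  finally have "hm (map uminus ((hd ds - 1) # tl ds @ [-2])) = FF (p+q) q"
    using pq(4) FF_right by simp
  moreover have "coprime (p+q) q"
    using pq(1) by (smt (verit, best) coprime_imp_coprime dvd_diff_left_iff dvd_add_left_iff)
  ultimately show ?case using pq by (intro exI[of _ "p+q"] exI[of _ q]) auto
qed

lemma Gr_bwd:
  "p > q \<Longrightarrow> q > 0 \<Longrightarrow> coprime p q \<Longrightarrow> \<exists>ds\<in>Gr. hm (map uminus ds) = FF p q"
proof (induction "nat p" arbitrary: p q rule: less_induct)
  case less
  consider "p = 2*q" | "p > 2*q" | "p < 2*q" by linarith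
  then show ?case
  proof cases
    case 1
    then have "q dvd p" by simp
    then have "q = 1" using less.prems(2,3)
    proof -
      have "is_unit q" using coprime_common_divisor[OF less.prems(3) `q dvd p`] by simp
      then show ?thesis using less.prems(2) by simp
    qed
    with 1 have "p = 2" by simp
    show ?thesis
      by (rule bexI[of _ "[-4]"]) (auto simp: FF_def mM_def `p = 2` `q = 1` intro: Gr.base)
  next
    case 2
    have "nat (p - q) < nat p" using less.prems by simp
    moreover have "coprime (p-q) q" using less.prems(3)
      by (smt (verit, best) coprime_imp_coprime dvd_diff_left_iff dvd_add_left_iff)
    ultimately obtain ds where ds: "ds \<in> Gr" "hm (map uminus ds) = FF (p-q) q"
      using less.hyps[of "p-q" q] 2 less.prems by auto
    have ne: "ds \<noteq> []" using ds(2) 2 by (auto simp: FF_def)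
    have dsx: "ds = hd ds # tl ds" using ne by simp
    have "map uminus ((hd ds - 1) # tl ds @ [-2]) = (- hd ds + 1) # map uminus (tl ds) @ [2]"
      by simp
    hence "hm (map uminus ((hd ds - 1) # tl ds @ [-2])) =
       mmul (1,1,0,1) (mmul (hm (- hd ds # map uminus (tl ds))) (mM 2))"
      by (simp only: hm_right)
    also have "- hd ds # map uminus (tl ds) = map uminus ds"
      by (subst (2) dsx) simp
    finally have "hm (map uminus ((hd ds - 1) # tl ds @ [-2])) = FF p q"
      using ds(2) FF_right[of "p-q" q] by simp
    moreover have "(hd ds - 1) # tl ds @ [-2] \<in> Gr" using ds(1) ne by (rule Gr.right)
    ultimately show ?thesis by blast
  next
    case 3
    have "nat q < nat p" using less.prems by simp
    moreover have "coprime q (2*q-p)" using less.prems(3)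
      by (smt (verit, best) coprime_imp_coprime dvd_diff_left_iff)
    ultimately obtain ds where ds: "ds \<in> Gr" "hm (map uminus ds) = FF q (2*q-p)"
      using less.hyps[of q "2*q-p"] 3 less.prems by auto
    have ne: "ds \<noteq> []" using ds(2) 3 less.prems by (auto simp: FF_def)
    have dsx: "ds = butlast ds @ [last ds]" using ne by simp
    have "map uminus ((-2) # butlast ds @ [last ds - 1]) = 2 # map uminus (butlast ds) @ [- last ds + 1]"
      by simp
    hence "hm (map uminus ((-2) # butlast ds @ [last ds - 1])) =
       mmul (mM 2) (mmul (hm (map uminus (butlast ds) @ [- last ds])) (1,0,-1,1))"
      by (simp only: hm_left)
    also have "map uminus (butlast ds) @ [- last ds] = map uminus ds"
      by (subst (2) dsx) simp
    finally have "hm (map uminus ((-2) # butlast ds @ [last ds - 1])) = FF p q"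
      using ds(2) FF_left[of q "2*q-p"] by simp
    moreover have "(-2) # butlast ds @ [last ds - 1] \<in> Gr" using ds(1) ne by (rule Gr.left)
    ultimately show ?thesis by blast
  qed
qed

lemma Gr_entries: "ds \<in> Gr \<Longrightarrow> \<forall>d\<in>set ds. d \<le> -2"
proof (induction rule: Gr.induct)
  case base then show ?case by simp
next
  case (left ds)
  have "last ds \<in> set ds" using left.hyps(2) by simp
  moreover have "set (butlast ds) \<subseteq> set ds" by (rule in_set_butlastD[THEN subsetI]) 
  ultimately show ?case using left.IH by auto
next
  case (right ds)
  have "hd ds \<in> set ds" using right.hyps(2) by simp
  moreover have "set (tl ds) \<subseteq> set ds" by (cases ds) auto
  ultimately show ?case using right.IH by auto
qed

definition hA where "hA xs = fst (hm xs)"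
definition hB where "hB xs = fst (snd (hm xs))"
definition hC where "hC xs = fst (snd (snd (hm xs)))"
definition hE where "hE xs = snd (snd (snd (hm xs)))"

lemma h_nil: "hA [] = 1" "hB [] = 0" "hC [] = 0" "hE [] = 1"
  by (simp_all add: hA_def hB_def hC_def hE_def)

lemma h_cons: "hA (a#r) = a * hA r - hC r" "hB (a#r) = a * hB r - hE r"
  "hC (a#r) = hA r" "hE (a#r) = hB r"
  by (cases "hm r"; simp add: hA_def hB_def hC_def hE_def mM_def)+

lemma h_det: "hA xs * hE xs - hB xs * hC xs = 1"
  by (induction xs) (simp_all add: h_nil h_cons algebra_simps)

lemma h_pos: "\<forall>a\<in>set xs. a \<ge> 2 \<Longrightarrow> hA xs > hC xs \<and> hC xs \<ge> 0"
proof (induction xs)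
  case Nil then show ?case by (simp add: h_nil)
next
  case (Cons a r)
  then have "hA r > hC r" "hC r \<ge> 0" "a \<ge> 2" by auto
  moreover have "a * hA r \<ge> 2 * hA r" using calculation by (intro mult_right_mono) auto
  ultimately have "hA r < a * hA r - hC r" "0 \<le> hA r" by linarith+
  then show ?case by (simp add: h_cons)
qed

lemma h_cf: "xs \<noteq> [] \<Longrightarrow> \<forall>a\<in>set xs. a \<ge> 2 \<Longrightarrow> hj_cf xs = hA xs / hC xs"
proof (induction xs rule: hj_cf.induct)
  case 1 then show ?case by simp
next
  case (2 a) then show ?case by (simp add: h_cons h_nil)
next
  case (3 a b rest)
  have IH: "hj_cf (b # rest) = hA (b#rest) / hC (b#rest)" using 3 by auto
  have pos: "hA (b#rest) > 0" using h_pos[of "b#rest"] 3(3) by auto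
  have e1: "hA (a#b#rest) = a * hA (b#rest) - hC (b#rest)" "hC (a#b#rest) = hA (b#rest)"
    by (rule h_cons)+
  have "hj_cf (a # b # rest) = of_int a - 1 / (hA (b#rest) / hC (b#rest))"
    using IH by simp
  also have "\<dots> = (of_int a * hA (b#rest) - hC (b#rest)) / hA (b#rest)"
    using pos by (simp add: field_simps)
  finally show ?case unfolding e1 by simp
qed

lemma h_uniq: "\<forall>a\<in>set xs. a \<ge> 2 \<Longrightarrow> \<forall>a\<in>set ys. a \<ge> 2 \<Longrightarrow>
   hA xs = hA ys \<Longrightarrow> hC xs = hC ys \<Longrightarrow> xs = ys"
proof (induction xs arbitrary: ys)
  case Nil
  then show ?case
  proof (cases ys)
    case (Cons b s)
    have "hC s \<ge> 0" "hA s > hC s" using h_pos[of s] Nil.prems(2) Cons by auto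
    then show ?thesis using Nil.prems(4) Cons by (simp add: h_nil h_cons)
  qed simp
next
  case (Cons a r)
  then obtain b s where ys: "ys = b # s"
  proof (cases ys)
    case Nil
    have "hC r \<ge> 0" "hA r > hC r" using h_pos[of r] Cons.prems(1) by auto
    then show ?thesis using Cons.prems(4) Nil by (simp add: h_nil h_cons)
  qed simp
  have r2: "\<forall>a\<in>set r. a \<ge> 2" and s2: "\<forall>a\<in>set s. a \<ge> 2" using Cons.prems ys by auto
  have eA: "hA r = hA s" using Cons.prems(4) ys by (simp add: h_cons)
  have e: "a * hA r - hC r = b * hA r - hC s" using Cons.prems(3) ys eA by (simp add: h_cons)
  have pr: "hA r > hC r" "hC r \<ge> 0" using h_pos[OF r2] by auto
  have ps: "hA r > hC s" "hC s \<ge> 0" using h_pos[OF s2] eA by auto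
  have "(a - b) * hA r = hC r - hC s" using e by (simp add: algebra_simps)
  hence "a = b"
  proof -
    assume h: "(a - b) * hA r = hC r - hC s"
    show "a = b"
    proof (rule ccontr)
      assume "a \<noteq> b"
      then consider "a - b \<ge> 1" | "a - b \<le> -1" by linarith
      then show False
      proof cases
        case 1
        hence "(a - b) * hA r \<ge> 1 * hA r" using pr by (intro mult_right_mono) auto
        then show False using h pr ps by linarith
      next
        case 2
        hence "(a - b) * hA r \<le> (-1) * hA r" using pr by (intro mult_right_mono) auto
        then show False using h pr ps by linarith
      qed
    qed
  qed
  moreover have "hC r = hC s" using e `a = b` by simp
  ultimately show ?case using Cons.IH[OF r2 s2 eA] ys by simp
qed

theorem proposition4p1:
  fixes as :: "int list"
  assumes "as \<noteq> []"
    and "\<forall>a\<in>set as. a \<ge> 2"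
  shows "map uminus as \<in> Gr \<longleftrightarrow>
    (\<exists>p q :: int. coprime p q \<and> p > q \<and> q > 0 \<and>
        hj_cf as = of_int (p^2) / of_int (p * q - 1))"
proof
  assume "map uminus as \<in> Gr"
  from Gr_fwd[OF this] obtain p q where pq: "coprime p q" "p > q" "q > 0"
    "hm as = FF p q" by auto
  have "hA as = p^2" "hC as = p*q - 1" using pq(4) by (simp_all add: hA_def hC_def FF_def)
  then show "\<exists>p q :: int. coprime p q \<and> p > q \<and> q > 0 \<and>
        hj_cf as = of_int (p^2) / of_int (p * q - 1)"
    using pq h_cf[OF assms] by auto
next
  assume "\<exists>p q :: int. coprime p q \<and> p > q \<and> q > 0 \<and>
        hj_cf as = of_int (p^2) / of_int (p * q - 1)"
  then obtain p q :: int where pq: "coprime p q" "p > q" "q > 0"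
    "hj_cf as = of_int (p^2) / of_int (p * q - 1)" by auto
  have pq1: "p * q - 1 > 0"
  proof -
    have "p * q \<ge> 2 * 1" using pq(2,3) by (intro mult_mono) auto
    then show ?thesis by simp
  qed
  have Cpos: "hC as > 0"
    using assms(1) h_pos[of "tl as"] assms(2) h_cons(3)[of "hd as" "tl as"]
    by (cases as) (auto simp: h_cons)
  have fr: "real_of_int (hA as) / of_int (hC as) = of_int (p^2) / of_int (p * q - 1)"
    using pq(4) h_cf[OF assms] by simp
  have "real_of_int (hA as) * of_int (p * q - 1) = of_int (p^2) * of_int (hC as)"
  proof -
    have n1: "real_of_int (p*q-1) \<noteq> 0" using pq1 by (simp only: of_int_eq_0_iff)
    have n2: "real_of_int (hC as) \<noteq> 0" using Cpos by simp
    show ?thesis using fr by (simp only: frac_eq_eq[OF n2 n1])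
  qed
  hence eq: "hA as * (p * q - 1) = p^2 * hC as"
    by (metis of_int_eq_iff of_int_mult)
  have c1: "coprime (hA as) (hC as)"
  proof (rule coprimeI)
    fix c assume "c dvd hA as" "c dvd hC as"
    hence "c dvd hA as * hE as - hB as * hC as" by simp
    thus "is_unit c" using h_det[of as] by simp
  qed
  have c0: "coprime p (p * q - 1)"
  proof (rule coprimeI)
    fix c assume a: "c dvd p" "c dvd p * q - 1"
    have "c dvd p * q" using a by simp
    hence "c dvd p * q - (p * q - 1)" using a(2) by (rule dvd_diff)
    thus "is_unit c" by simp
  qed
  have c2: "coprime (p^2) (p * q - 1)" using c0 by simp
  have Apos: "hA as > 0" using h_pos[OF assms(2)] by auto
  have "hA as dvd p^2 * hC as" using eq by (metis dvd_triv_left)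
  hence d1: "hA as dvd p^2" using c1 by (simp add: coprime_dvd_mult_left_iff)
  have "p^2 dvd hA as * (p * q - 1)" unfolding eq by simp
  hence d2: "p^2 dvd hA as" using c2 by (simp add: coprime_dvd_mult_left_iff)
  have eA: "hA as = p^2" using d1 d2 Apos by (simp add: zdvd_antisym_nonneg)
  have eC: "hC as = p * q - 1" using eq eA pq(2,3) by (simp add: power2_eq_square)
  from Gr_bwd[OF pq(2,3,1)] obtain ds where ds: "ds \<in> Gr" "hm (map uminus ds) = FF p q" by blast
  have ds2: "\<forall>a\<in>set (map uminus ds). a \<ge> 2" using Gr_entries[OF ds(1)] by auto
  have "hA (map uminus ds) = p^2" "hC (map uminus ds) = p*q - 1"
    using ds(2) by (simp_all add: hA_def hC_def FF_def)
  hence "as = map uminus ds" using h_uniq[OF assms(2) ds2] eA eC by simp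
  then show "map uminus as \<in> Gr" using ds(1) by simp
qed

end
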